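(* Let $\mathcal{M}\subseteq\mathbb{R}^d$ be a compact embedded $C^2$-submanifold without boundary with reach $\tau_{\mathcal{M}}>0$, let $f\in C^1(\mathbb{R}^d)$, $C=\sup_{\mathcal{T}(\tau_{\mathcal{M}})}\|\nabla f\|$, $\eta\ge0$, $\tau\in(0,\tau_{\mathcal{M}})$, $\epsilon>0$, and $s\in C^1(\mathbb{R}^d;\mathbb{R}^d)$ with $\|s(x)-\pi(x)\|<\epsilon$ and $\|s'(x)-P_0(x)\|<\epsilon$ for all $x\in\mathcal{T}(\tau)$. Then $$\sup_{x\in\mathcal{T}(\tau)}\|s'(x)\|\le\epsilon+\frac{1}{1-\tau/\tau_{\mathcal{M}}}.$$ If additionally $\epsilon\in(0,\tau]$, then for all $x\in\mathcal{T}(\tau)$, $$\|G_s^\eta(x)\|\le C\|s'(x)\|+\eta\|s(x)-x\|\le C\Big(\epsilon+\frac{1}{1-\tau/\tau_{\mathcal{M}}}\Big)+2\eta\tau,$$ where $G_s^\eta(x)=s'(x)\nabla f(x)+\eta(x-s(x))$.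
   Context: Reach $\tau_{\mathcal{M}}$: largest $\tau\ge0$ such that $(p,v)\mapsto p+v$ on $\{(p,v):p\in\mathcal{M},v\in N_p\mathcal{M},\|v\|<\tau\}$ is a diffeomorphism onto its image; $\mathcal{T}(\tau)=\{p+v:p\in\mathcal{M},v\in N_p\mathcal{M},\|v\|<\tau\}$; $\pi(x)$ is the unique closest point of $\mathcal{M}$ to $x$, $P_0(x)=\pi'(x)$ its Jacobian. Matrix norms are operator norms. *)

theory Defs
  imports "HOL-Analysis.Analysis"
begin

definition C1_on :: "'a::real_normed_vector set \<Rightarrow> ('a \<Rightarrow> 'b::real_normed_vector) \<Rightarrow> bool" where
  "C1_on U f \<longleftrightarrow> (\<exists>D :: 'a \<Rightarrow> ('a \<Rightarrow>\<^sub>L 'b).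
      (\<forall>x\<in>U. (f has_derivative blinfun_apply (D x)) (at x)) \<and> continuous_on U D)"

definition C2_on :: "'a::real_normed_vector set \<Rightarrow> ('a \<Rightarrow> 'b::real_normed_vector) \<Rightarrow> bool" where
  "C2_on U f \<longleftrightarrow> (\<exists>(D :: 'a \<Rightarrow> ('a \<Rightarrow>\<^sub>L 'b)) (D2 :: 'a \<Rightarrow> ('a \<Rightarrow>\<^sub>L ('a \<Rightarrow>\<^sub>L 'b))).
      (\<forall>x\<in>U. (f has_derivative blinfun_apply (D x)) (at x)) \<and>
      (\<forall>x\<in>U. (D has_derivative blinfun_apply (D2 x)) (at x)) \<and> continuous_on U D2)"

definition C2_submanifold :: "'a::euclidean_space set \<Rightarrow> nat \<Rightarrow> bool" where
  "C2_submanifold M n \<longleftrightarrow> (\<forall>p\<in>M. \<exists>U V (\<phi> :: 'a \<Rightarrow> 'a) \<psi> T.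
      open U \<and> p \<in> U \<and> open V \<and> subspace T \<and> dim T = n \<and>
      C2_on U \<phi> \<and> C2_on V \<psi> \<and> \<phi> ` U = V \<and>
      (\<forall>x\<in>U. \<psi> (\<phi> x) = x) \<and> (\<forall>y\<in>V. \<phi> (\<psi> y) = y) \<and>
      \<phi> ` (M \<inter> U) = T \<inter> V)"

definition tangent_space :: "'a::euclidean_space set \<Rightarrow> 'a \<Rightarrow> 'a set" where
  "tangent_space M p = {v. \<exists>\<gamma> :: real \<Rightarrow> 'a. \<exists>e>0. \<gamma> 0 = p \<and>
      (\<forall>t. \<bar>t\<bar> < e \<longrightarrow> \<gamma> t \<in> M) \<and> (\<gamma> has_vector_derivative v) (at 0)}"

definition normal_space :: "'a::euclidean_space set \<Rightarrow> 'a \<Rightarrow> 'a set" where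
  "normal_space M p = {v. \<forall>u\<in>tangent_space M p. v \<bullet> u = 0}"

definition normal_bundle :: "'a::euclidean_space set \<Rightarrow> real \<Rightarrow> ('a \<times> 'a) set" where
  "normal_bundle M r = {(p, v). p \<in> M \<and> v \<in> normal_space M p \<and> norm v < r}"

definition tube :: "'a::euclidean_space set \<Rightarrow> real \<Rightarrow> 'a set" where
  "tube M r = (\<lambda>(p, v). p + v) ` normal_bundle M r"

definition tubular_diffeo :: "'a::euclidean_space set \<Rightarrow> real \<Rightarrow> bool" where
  "tubular_diffeo M r \<longleftrightarrow>
     inj_on (\<lambda>(p, v). p + v) (normal_bundle M r) \<and> open (tube M r) \<and>
     (\<exists>g :: 'a \<Rightarrow> 'a \<times> 'a. C1_on (tube M r) g \<and>
        (\<forall>(p, v)\<in>normal_bundle M r. g (p + v) = (p, v)))"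

definition is_reach :: "'a::euclidean_space set \<Rightarrow> real \<Rightarrow> bool" where
  "is_reach M t \<longleftrightarrow> t \<ge> 0 \<and> tubular_diffeo M t \<and> (\<forall>r\<ge>0. tubular_diffeo M r \<longrightarrow> r \<le> t)"

definition proj :: "'a::euclidean_space set \<Rightarrow> 'a \<Rightarrow> 'a" where
  "proj M x = (THE p. p \<in> M \<and> (\<forall>q\<in>M. dist x p \<le> dist x q))"

definition P0 :: "'a::euclidean_space set \<Rightarrow> 'a \<Rightarrow> ('a \<Rightarrow>\<^sub>L 'a)" where
  "P0 M x = Blinfun (frechet_derivative (proj M) (at x))"

end

theory Submission
  imports Defs
begin

lemma foc:
  fixes M :: "'a::euclidean_space set"
  assumes q: "q \<in> M" and mn: "\<forall>z\<in>M. dist x q \<le> dist x z"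
  shows "x - q \<in> normal_space M q"
  unfolding normal_space_def
proof (clarify)
  fix u assume "u \<in> tangent_space M q"
  then obtain \<gamma> e where e: "e > 0" "\<gamma> 0 = q" "\<forall>t. \<bar>t\<bar> < e \<longrightarrow> \<gamma> t \<in> M"
    and d: "(\<gamma> has_vector_derivative u) (at 0)"
    unfolding tangent_space_def by blast
  define \<phi> where "\<phi> t = (x - \<gamma> t) \<bullet> (x - \<gamma> t)" for t
  have g: "(\<gamma> has_derivative (\<lambda>t. t *\<^sub>R u)) (at 0)"
    using d unfolding has_vector_derivative_def .
  have g2: "((\<lambda>t. x - \<gamma> t) has_derivative (\<lambda>t. - (t *\<^sub>R u))) (at 0)"
    using has_derivative_diff[OF has_derivative_const[of x] g] by simp
  have "(\<phi> has_derivative (\<lambda>h. (x - \<gamma> 0) \<bullet> (- (h *\<^sub>R u)) + (- (h *\<^sub>R u)) \<bullet> (x - \<gamma> 0))) (at 0)"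
    unfolding \<phi>_def by (rule has_derivative_inner[OF g2 g2])
  moreover have "(\<lambda>h. (x - \<gamma> 0) \<bullet> (- (h *\<^sub>R u)) + (- (h *\<^sub>R u)) \<bullet> (x - \<gamma> 0)) = (*) (-2 * ((x - q) \<bullet> u))"
    using e(2) by (auto simp: inner_commute algebra_simps fun_eq_iff)
  ultimately have dd: "DERIV \<phi> 0 :> (-2 * ((x - q) \<bullet> u))"
    by (simp add: has_field_derivative_def)
  have mm: "\<forall>y. \<bar>0 - y\<bar> < e \<longrightarrow> \<phi> 0 \<le> \<phi> y"
  proof (intro allI impI)
    fix y :: real assume "\<bar>0 - y\<bar> < e"
    then have "\<gamma> y \<in> M" using e by auto
    then have "dist x q \<le> dist x (\<gamma> y)" using mn by auto
    then have "norm (x - q) ^ 2 \<le> norm (x - \<gamma> y) ^ 2" by (simp add: dist_norm)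
    then show "\<phi> 0 \<le> \<phi> y" using e(2) by (simp add: \<phi>_def power2_norm_eq_inner)
  qed
  have "-2 * ((x - q) \<bullet> u) = 0" by (rule DERIV_local_min[OF dd e(1) mm])
  then show "(x - q) \<bullet> u = 0" by simp
qed

lemma nearest_unique:
  fixes M :: "'a::euclidean_space set"
  assumes td: "tubular_diffeo M r" and pu: "(p, u) \<in> normal_bundle M r"
    and q: "q \<in> M" and mn: "\<forall>z\<in>M. dist (p + u) q \<le> dist (p + u) z"
  shows "q = p"
proof -
  have pM: "p \<in> M" and nu: "norm u < r" using pu by (auto simp: normal_bundle_def)
  have nq: "p + u - q \<in> normal_space M q" using foc[OF q mn] .
  have "dist (p + u) q \<le> dist (p + u) p" using bspec[OF mn pM] .
  then have "norm (p + u - q) \<le> norm u" by (simp add: dist_norm)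
  then have nb: "(q, p + u - q) \<in> normal_bundle M r"
    unfolding normal_bundle_def using q nq nu by simp
  have eqn: "(\<lambda>(p, v). p + v) (q, p + u - q) = (\<lambda>(p, v). p + v) (p, u)" by simp
  have inj: "inj_on (\<lambda>(p, v). p + v) (normal_bundle M r)" by (rule conjunct1[OF td[unfolded tubular_diffeo_def]])
  have "(q, p + u - q) = (p, u)" by (rule inj_onD[OF inj eqn nb pu])
  then show ?thesis by (rule prod.inject[THEN iffD1, THEN conjunct1])
qed

lemma nearest_exists:
  fixes M :: "'a::euclidean_space set"
  assumes "compact M" "M \<noteq> {}"
  shows "\<exists>q\<in>M. \<forall>z\<in>M. dist x q \<le> dist x z"
proof -
  have "closed M" using assms(1) by (rule compact_imp_closed)
  from distance_attains_inf[OF this assms(2), of x] obtain q where "q \<in> M" "\<And>y. y \<in> M \<Longrightarrow> dist x q \<le> dist x y"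
    by metis
  then show ?thesis by blast
qed

lemma nearest_is_p:
  fixes M :: "'a::euclidean_space set"
  assumes "compact M" and td: "tubular_diffeo M r" and pu: "(p, u) \<in> normal_bundle M r"
    and z: "z \<in> M"
  shows "dist (p + u) p \<le> dist (p + u) z"
proof -
  have "M \<noteq> {}" using pu by (auto simp: normal_bundle_def)
  then obtain q where q: "q \<in> M" "\<forall>z\<in>M. dist (p + u) q \<le> dist (p + u) z"
    using nearest_exists assms(1) by blast
  then have "q = p" using nearest_unique[OF td pu] by blast
  then show ?thesis using q z by auto
qed

lemma proj_eq:
  fixes M :: "'a::euclidean_space set"
  assumes "compact M" and td: "tubular_diffeo M r" and pu: "(p, u) \<in> normal_bundle M r"
  shows "proj M (p + u) = p"
  unfolding proj_def
proof (rule the_equality)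
  show "p \<in> M \<and> (\<forall>q\<in>M. dist (p + u) p \<le> dist (p + u) q)"
    using pu nearest_is_p[OF assms] by (auto simp: normal_bundle_def)
next
  fix q assume "q \<in> M \<and> (\<forall>z\<in>M. dist (p + u) q \<le> dist (p + u) z)"
  then show "q = p" using nearest_unique[OF td pu] by blast
qed

lemma normal_scale: "v \<in> normal_space M p \<Longrightarrow> c *\<^sub>R v \<in> normal_space M p"
  by (simp add: normal_space_def)

lemma normal_ineq:
  fixes M :: "'a::euclidean_space set"
  assumes "compact M" and td: "tubular_diffeo M r" and p: "p \<in> M" and v: "v \<in> normal_space M p"
    and q: "q \<in> M" and c: "0 < c" "c < r"
  shows "2 * c * (v \<bullet> (q - p)) \<le> norm v * norm (q - p) ^ 2"
proof (cases "v = 0")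
  case True then show ?thesis by simp
next
  case False
  then have nv: "norm v > 0" by simp
  define u where "u = (c / norm v) *\<^sub>R v"
  have nu: "norm u = c" using nv c by (simp add: u_def)
  have "(p, u) \<in> normal_bundle M r"
    using p normal_scale[OF v] nu c by (auto simp: normal_bundle_def u_def)
  from nearest_is_p[OF assms(1) td this q]
  have "norm u \<le> norm (u - (q - p))" by (simp add: dist_norm algebra_simps)
  then have "norm u ^ 2 \<le> norm (u - (q - p)) ^ 2" by (simp add: power_mono)
  also have "\<dots> = norm u ^ 2 - 2 * (u \<bullet> (q - p)) + norm (q - p) ^ 2"
    by (simp add: power2_norm_eq_inner inner_diff_left inner_diff_right inner_commute)
  finally have "2 * (u \<bullet> (q - p)) \<le> norm (q - p) ^ 2" by simp
  then have "2 * (c / norm v) * (v \<bullet> (q - p)) \<le> norm (q - p) ^ 2" by (simp add: u_def)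
  then have "2 * c * (v \<bullet> (q - p)) / norm v \<le> norm (q - p) ^ 2" by simp
  then have "2 * c * (v \<bullet> (q - p)) \<le> norm (q - p) ^ 2 * norm v" using nv by (simp add: divide_le_eq)
  then show ?thesis by (simp add: mult.commute)
qed

lemma lipschitz_proj:
  fixes M :: "'a::euclidean_space set"
  assumes cM: "compact M" and td: "tubular_diffeo M r" and t: "0 < t" "t < r"
    and pv: "(p, v) \<in> normal_bundle M t" and y: "y \<in> tube M r"
    and yc: "norm (y - (p + v)) \<le> (t - norm v) / 2"
  shows "norm (proj M y - p) * (1 - t / r) \<le> norm (y - (p + v))"
proof -
  obtain q w where qw: "(q, w) \<in> normal_bundle M r" "y = q + w"
    using y by (auto simp: tube_def)
  have py: "proj M y = q" using proj_eq[OF cM td qw(1)] qw(2) by simp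
  have pM: "p \<in> M" and vN: "v \<in> normal_space M p" and nv: "norm v < t"
    using pv by (auto simp: normal_bundle_def)
  have qM: "q \<in> M" and wN: "w \<in> normal_space M q" using qw by (auto simp: normal_bundle_def)
  define x where "x = p + v"
  define r0 where "r0 = (t + norm v) / 2"
  have "dist y q \<le> dist y p" using nearest_is_p[OF cM td qw(1) pM] qw(2) by simp
  also have "\<dots> \<le> norm (y - x) + norm v"
    using norm_triangle_ineq[of "y - x" v] by (simp add: dist_norm x_def)
  finally have nw: "norm w \<le> r0" using yc qw(2) by (simp add: dist_norm r0_def x_def)
  have nvr: "norm v \<le> r0" using nv by (simp add: r0_def)
  have nv0: "0 \<le> norm v" by simp
  have r0p1: "r0 > 0" unfolding r0_def using add_pos_nonneg[OF t(1) nv0] by simp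
  have r0p2: "r0 < t" unfolding r0_def using nv by simp
  note r0p = r0p1 r0p2
  define c where "c = r0 * r / t"
  have cp: "0 < c" "c < r" using r0p t by (auto simp: c_def field_simps)
  have rc: "r0 / c = t / r" using r0p t by (simp add: c_def field_simps)
  define D where "D = norm (q - p)"
  have i1: "2 * c * (v \<bullet> (q - p)) \<le> r0 * D ^ 2"
    using normal_ineq[OF cM td pM vN qM cp] mult_right_mono[OF nvr, of "D^2"] by (simp add: D_def)
  have i2: "2 * c * (w \<bullet> (p - q)) \<le> r0 * D ^ 2"
    using normal_ineq[OF cM td qM wN pM cp] mult_right_mono[OF nw, of "D^2"]
    by (simp add: D_def norm_minus_commute)
  have "v - w = (x - y) - (p - q)" using qw(2) by (simp add: x_def)
  have eqA: "(v - w) \<bullet> (q - p) = (x - y) \<bullet> (q - p) + D ^ 2"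
    using \<open>v - w = _\<close> by (simp add: D_def power2_norm_eq_inner inner_diff_left inner_diff_right inner_commute)
  have eqB: "(v - w) \<bullet> (q - p) = v \<bullet> (q - p) + w \<bullet> (p - q)"
    by (simp add: inner_diff_left inner_diff_right)
  have cs: "(x - y) \<bullet> (q - p) \<ge> - (norm (x - y) * D)"
  proof -
    have "(y - x) \<bullet> (q - p) \<le> norm (x - y) * D"
      using norm_cauchy_schwarz[of "y - x" "q - p"] by (simp add: D_def norm_minus_commute)
    moreover have "(x - y) \<bullet> (q - p) = - ((y - x) \<bullet> (q - p))" by (simp add: inner_diff_left)
    ultimately show ?thesis by linarith
  qed
  have s1: "2 * c * ((v - w) \<bullet> (q - p)) = 2 * c * (v \<bullet> (q - p)) + 2 * c * (w \<bullet> (p - q))"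
    unfolding eqB by (simp add: distrib_left)
  have s2: "2 * c * ((v - w) \<bullet> (q - p)) = 2 * c * ((x - y) \<bullet> (q - p)) + 2 * c * D ^ 2"
    unfolding eqA by (simp add: distrib_left)
  have s3: "c * ((x - y) \<bullet> (q - p)) \<ge> c * (- (norm (x - y) * D))"
    using mult_left_mono[OF cs, of c] cp by simp
  have "c * D ^ 2 \<le> r0 * D ^ 2 + c * (norm (x - y) * D)"
    using s1 s2 s3 i1 i2 by linarith
  moreover have "(c - r0) * D * D = c * D ^ 2 - r0 * D ^ 2" by (simp add: left_diff_distrib power2_eq_square)
  moreover have "c * norm (x - y) * D = c * (norm (x - y) * D)" by simp
  ultimately have "(c - r0) * D * D \<le> c * norm (x - y) * D" by linarith
  then have "(c - r0) * D \<le> c * norm (x - y)"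
    using cp by (cases "D = 0") (auto simp: D_def)
  then have "D * (1 - r0 / c) \<le> norm (x - y)" using cp by (simp add: field_simps)
  then show ?thesis using rc py by (simp add: D_def x_def norm_minus_commute)
qed

lemma deriv_bound:
  fixes f :: "'a::real_normed_vector \<Rightarrow> 'b::real_normed_vector"
  assumes fd: "(f has_derivative f') (at x)" and L: "L \<ge> 0" and d0: "\<delta> > 0"
    and lip: "\<And>y. norm (y - x) < \<delta> \<Longrightarrow> norm (f y - f x) \<le> L * norm (y - x)"
  shows "norm (f' h) \<le> L * norm h"
proof (cases "h = 0")
  case True
  have "linear f'" using fd has_derivative_linear by blast
  then show ?thesis using True linear_0 by auto
next
  case False
  then have nh: "norm h > 0" by simp
  have bl: "bounded_linear f'" using fd has_derivative_bounded_linear by blast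
  show ?thesis
  proof (rule field_le_epsilon)
    fix e :: real assume e: "e > 0"
    then have "e / norm h > 0" using nh by simp
    then obtain d where d: "d > 0" "\<And>y. norm (y - x) < d \<Longrightarrow> norm (f y - f x - f' (y - x)) \<le> (e / norm h) * norm (y - x)"
      using fd unfolding has_derivative_at_alt by blast
    define tt where "tt = min d \<delta> / (2 * norm h)"
    have tp: "tt > 0" using d d0 nh by (simp add: tt_def)
    have ny: "norm (tt *\<^sub>R h) < min d \<delta>" using tp nh d d0 by (simp add: tt_def min_def)
    let ?y = "x + tt *\<^sub>R h"
    have a1: "norm (f ?y - f x - f' (tt *\<^sub>R h)) \<le> (e / norm h) * norm (tt *\<^sub>R h)"
      using d(2)[of ?y] ny by simp
    have a2: "norm (f ?y - f x) \<le> L * norm (tt *\<^sub>R h)" using lip[of ?y] ny by simp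
    have "norm (f' (tt *\<^sub>R h)) \<le> norm (f ?y - f x) + norm (f ?y - f x - f' (tt *\<^sub>R h))"
      by (metis norm_minus_commute norm_triangle_sub add.commute)
    also have "\<dots> \<le> L * norm (tt *\<^sub>R h) + (e / norm h) * norm (tt *\<^sub>R h)" using a1 a2 by simp
    finally have "tt * norm (f' h) \<le> tt * (L * norm h + e)"
      using tp nh by (simp add: linear_cmul[OF bounded_linear.linear[OF bl]] field_simps)
    then show "norm (f' h) \<le> L * norm h + e" using tp by simp
  qed
qed

theorem lemma9:
  fixes M :: "'a::euclidean_space set" and n :: nat
    and \<tau>M \<tau> \<epsilon> \<eta> C :: real
    and f :: "'a \<Rightarrow> real" and gradf :: "'a \<Rightarrow> 'a"
    and s :: "'a \<Rightarrow> 'a" and s' :: "'a \<Rightarrow> ('a \<Rightarrow>\<^sub>L 'a)"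
  assumes manifold: "C2_submanifold M n" and compact: "compact M"
    and reach: "is_reach M \<tau>M" and reach_pos: "\<tau>M > 0"
    and f_deriv: "\<And>x. (f has_derivative (\<lambda>h. gradf x \<bullet> h)) (at x)"
    and f_C1: "continuous_on UNIV gradf"
    and C_def: "C = (SUP x\<in>tube M \<tau>M. norm (gradf x))"
    and eta: "\<eta> \<ge> 0"
    and tau: "0 < \<tau>" "\<tau> < \<tau>M"
    and eps: "\<epsilon> > 0"
    and s_deriv: "\<And>x. (s has_derivative blinfun_apply (s' x)) (at x)"
    and s_C1: "continuous_on UNIV s'"
    and s_close: "\<And>x. x \<in> tube M \<tau> \<Longrightarrow> norm (s x - proj M x) < \<epsilon>"
    and s'_close: "\<And>x. x \<in> tube M \<tau> \<Longrightarrow> norm (s' x - P0 M x) < \<epsilon>"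
  shows "(\<forall>x\<in>tube M \<tau>. norm (s' x) \<le> \<epsilon> + 1 / (1 - \<tau> / \<tau>M)) \<and>
         (\<epsilon> \<le> \<tau> \<longrightarrow> (\<forall>x\<in>tube M \<tau>.
            norm (blinfun_apply (s' x) (gradf x) + \<eta> *\<^sub>R (x - s x))
              \<le> C * norm (s' x) + \<eta> * norm (s x - x) \<and>
            C * norm (s' x) + \<eta> * norm (s x - x)
              \<le> C * (\<epsilon> + 1 / (1 - \<tau> / \<tau>M)) + 2 * \<eta> * \<tau>))"
proof -
  have td: "tubular_diffeo M \<tau>M" using reach unfolding is_reach_def by blast
  define L where "L = 1 / (1 - \<tau> / \<tau>M)"
  have qpos: "0 < 1 - \<tau> / \<tau>M" using tau reach_pos by (simp add: divide_less_eq)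
  have L0: "L \<ge> 0" using qpos by (simp add: L_def)
  have openT: "open (tube M \<tau>M)" using td unfolding tubular_diffeo_def by blast
  obtain g where gC1: "C1_on (tube M \<tau>M) g"
      and gi: "\<forall>(p, v)\<in>normal_bundle M \<tau>M. g (p + v) = (p, v)"
    using td unfolding tubular_diffeo_def by blast
  obtain Dg where Dg: "\<forall>y\<in>tube M \<tau>M. (g has_derivative blinfun_apply (Dg y)) (at y)"
    using gC1 unfolding C1_on_def by blast
  have pg: "proj M y = fst (g y)" if y: "y \<in> tube M \<tau>M" for y
  proof -
    obtain q w where qw: "(q, w) \<in> normal_bundle M \<tau>M" "y = q + w"
      using y by (auto simp: tube_def)
    have "proj M y = q" using proj_eq[OF compact td qw(1)] qw(2) by simp
    moreover have "g y = (q, w)" using gi qw by auto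
    ultimately show ?thesis by simp
  qed
  have tube_sub: "tube M \<tau> \<subseteq> tube M \<tau>M"
    using tau unfolding tube_def normal_bundle_def by auto
  have P0bound: "norm (P0 M x) \<le> L" if x: "x \<in> tube M \<tau>" for x
  proof -
    obtain p v where pv: "(p, v) \<in> normal_bundle M \<tau>" "x = p + v"
      using x by (auto simp: tube_def)
    have nv: "norm v < \<tau>" using pv by (simp add: normal_bundle_def)
    have pvM: "(p, v) \<in> normal_bundle M \<tau>M" using pv(1) tau by (auto simp: normal_bundle_def)
    have xT: "x \<in> tube M \<tau>M" using x tube_sub by blast
    have px: "proj M x = p" using proj_eq[OF compact td pvM] pv(2) by simp
    let ?D = "\<lambda>h. fst (blinfun_apply (Dg x) h)"
    have dproj: "(proj M has_derivative ?D) (at x)"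
      by (rule has_derivative_transform_within_open[OF has_derivative_fst[OF Dg[rule_format, OF xT]] openT xT])
         (simp add: pg)
    have "frechet_derivative (proj M) (at x) = ?D" using frechet_derivative_at[OF dproj] by simp
    then have P0eq: "P0 M x = Blinfun ?D" by (simp add: P0_def)
    have bl: "bounded_linear ?D" using dproj has_derivative_bounded_linear by blast
    obtain e where e: "e > 0" "ball x e \<subseteq> tube M \<tau>M" using openT xT openE by blast
    define \<delta> where "\<delta> = min e ((\<tau> - norm v) / 2)"
    have d0: "\<delta> > 0" using e nv by (simp add: \<delta>_def)
    have lip: "norm (proj M y - proj M x) \<le> L * norm (y - x)" if y: "norm (y - x) < \<delta>" for y
    proof -
      have "y \<in> ball x e" using y by (simp add: \<delta>_def dist_norm norm_minus_commute)
      then have yT: "y \<in> tube M \<tau>M" using e by blast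
      have "norm (y - (p + v)) \<le> (\<tau> - norm v) / 2" using y pv(2) by (simp add: \<delta>_def)
      from lipschitz_proj[OF compact td tau pv(1) yT this]
      have "norm (proj M y - p) * (1 - \<tau> / \<tau>M) \<le> norm (y - x)" using pv(2) by simp
      then have "norm (proj M y - p) \<le> norm (y - x) / (1 - \<tau> / \<tau>M)"
        using qpos by (simp add: le_divide_eq)
      then show ?thesis using px by (simp add: L_def)
    qed
    have "norm (?D h) \<le> L * norm h" for h
      by (rule deriv_bound[OF dproj L0 d0 lip])
    then show ?thesis unfolding P0eq
      by (intro norm_blinfun_bound L0) (simp add: bounded_linear_Blinfun_apply[OF bl])
  qed
  have part1: "norm (s' x) \<le> \<epsilon> + L" if x: "x \<in> tube M \<tau>" for x
  proof -
    have "norm (s' x) \<le> norm (P0 M x) + norm (s' x - P0 M x)" by (rule norm_triangle_sub)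
    then show ?thesis using P0bound[OF x] s'_close[OF x] by linarith
  qed
  have bdd: "bdd_above ((\<lambda>x. norm (gradf x)) ` tube M \<tau>M)"
  proof -
    define K where "K = {a + b | a b. a \<in> M \<and> b \<in> cball 0 \<tau>M}"
    have cK: "compact K" unfolding K_def by (rule compact_sums[OF compact compact_cball])
    have "tube M \<tau>M \<subseteq> K"
      unfolding tube_def K_def normal_bundle_def by (fastforce simp: less_imp_le)
    have "compact (gradf ` K)"
      by (rule compact_continuous_image[OF continuous_on_subset[OF f_C1] cK]) simp
    then obtain B where B: "\<forall>z\<in>gradf ` K. norm z \<le> B"
      using compact_imp_bounded bounded_pos by blast
    show ?thesis
    proof (rule bdd_aboveI2)
      fix y assume "y \<in> tube M \<tau>M"
      then have "y \<in> K" using \<open>tube M \<tau>M \<subseteq> K\<close> by blast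
      then show "norm (gradf y) \<le> B" using B by blast
    qed
  qed
  have gC: "norm (gradf x) \<le> C" if x: "x \<in> tube M \<tau>M" for x
    unfolding C_def by (rule cSUP_upper[OF x bdd])
  show ?thesis
  proof (intro conjI ballI impI)
    fix x assume "x \<in> tube M \<tau>"
    then show "norm (s' x) \<le> \<epsilon> + 1 / (1 - \<tau> / \<tau>M)" using part1 by (simp add: L_def)
  next
    fix x assume ee: "\<epsilon> \<le> \<tau>" and x: "x \<in> tube M \<tau>"
    have xT: "x \<in> tube M \<tau>M" using x tube_sub by blast
    have g: "norm (gradf x) \<le> C" by (rule gC[OF xT])
    have "norm (blinfun_apply (s' x) (gradf x) + \<eta> *\<^sub>R (x - s x))
        \<le> norm (blinfun_apply (s' x) (gradf x)) + norm (\<eta> *\<^sub>R (x - s x))"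
      by (rule norm_triangle_ineq)
    also have "norm (blinfun_apply (s' x) (gradf x)) \<le> norm (s' x) * norm (gradf x)"
      by (rule norm_blinfun)
    also have "\<dots> \<le> norm (s' x) * C" using g by (simp add: mult_left_mono)
    also have "norm (\<eta> *\<^sub>R (x - s x)) = \<eta> * norm (s x - x)"
      using eta by (simp add: norm_minus_commute)
    finally show "norm (blinfun_apply (s' x) (gradf x) + \<eta> *\<^sub>R (x - s x))
        \<le> C * norm (s' x) + \<eta> * norm (s x - x)" by (simp add: mult.commute)
  next
    fix x assume ee: "\<epsilon> \<le> \<tau>" and x: "x \<in> tube M \<tau>"
    have xT: "x \<in> tube M \<tau>M" using x tube_sub by blast
    have C0: "C \<ge> 0" using gC[OF xT] norm_ge_zero[of "gradf x"] by linarith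
    obtain p v where pv: "(p, v) \<in> normal_bundle M \<tau>" "x = p + v"
      using x by (auto simp: tube_def)
    have nv: "norm v < \<tau>" using pv by (simp add: normal_bundle_def)
    have pvM: "(p, v) \<in> normal_bundle M \<tau>M" using pv(1) tau by (auto simp: normal_bundle_def)
    have px: "proj M x = p" using proj_eq[OF compact td pvM] pv(2) by simp
    have "norm (s x - x) \<le> norm (s x - proj M x) + norm (proj M x - x)"
      using norm_triangle_ineq[of "s x - proj M x" "proj M x - x"] by simp
    also have "norm (proj M x - x) = norm v" using px pv(2) by simp
    finally have "norm (s x - x) \<le> 2 * \<tau>" using s_close[OF x] nv ee by linarith
    then have a: "\<eta> * norm (s x - x) \<le> 2 * \<eta> * \<tau>" using eta
      by (metis mult.assoc mult.commute mult_left_mono)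
    have b: "C * norm (s' x) \<le> C * (\<epsilon> + 1 / (1 - \<tau> / \<tau>M))"
      using part1[OF x] C0 by (simp add: L_def mult_left_mono)
    show "C * norm (s' x) + \<eta> * norm (s x - x) \<le> C * (\<epsilon> + 1 / (1 - \<tau> / \<tau>M)) + 2 * \<eta> * \<tau>"
      using a b by linarith
  qed
qed

end
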